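(* For $n\ge1$, $$b_n(1;t,1,1)=\sum_{k=0}^{n-1}c(n,k+1)t^k\quad\text{and}\quad b_n(1;1,1,t)=b_n(1;t,t,1)=\sum_{k=0}^{n-1}e(n,k)t^k.$$ That is, the number of inversion sequences of length $n$ with exactly $k$ levels equals $c(n,k+1)$, and the number with exactly $k$ ascents, as well as the number with exactly $k$ indices that are levels or descents, equals $e(n,k)$.
   Context: An inversion sequence of length $n$ is a sequence $\rho=\rho_1\cdots\rho_n$ of integers with $1\le \rho_i\le i$ for all $i$; $I_n$ is the set of them. A level, descent, or ascent of $\rho$ is an index $i\in[n-1]$ with $\rho_i=\rho_{i+1}$, $\rho_i>\rho_{i+1}$, or $\rho_i<\rho_{i+1}$, respectively. Define $b_n(1;p,q,r)=\sum_{\rho\in I_n}p^{\mathrm{lev}(\rho)}q^{\mathrm{des}(\rho)}r^{\mathrm{asc}(\rho)}$. Here $c(n,k)$ is the signless Stirling number of the first kind (number of permutations of $[n]$ with $k$ cycles) and $e(n,k)$ is the Eulerian number (number of permutations of $[n]$ with $k$ ascents). *)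

theory Defs
  imports "HOL-Combinatorics.Combinatorics" "HOL-Library.FuncSet"
begin

definition inv_seqs :: "nat \<Rightarrow> (nat \<Rightarrow> nat) set" where
  "inv_seqs n = (\<Pi>\<^sub>E i\<in>{1..n}. {1..i})"

definition levels :: "nat \<Rightarrow> (nat \<Rightarrow> nat) \<Rightarrow> nat" where
  "levels n \<rho> = card {i\<in>{1..<n}. \<rho> i = \<rho> (Suc i)}"

definition descents :: "nat \<Rightarrow> (nat \<Rightarrow> nat) \<Rightarrow> nat" where
  "descents n \<rho> = card {i\<in>{1..<n}. \<rho> i > \<rho> (Suc i)}"

definition ascents :: "nat \<Rightarrow> (nat \<Rightarrow> nat) \<Rightarrow> nat" where
  "ascents n \<rho> = card {i\<in>{1..<n}. \<rho> i < \<rho> (Suc i)}"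

definition b1 :: "nat \<Rightarrow> 'a::comm_semiring_1 \<Rightarrow> 'a \<Rightarrow> 'a \<Rightarrow> 'a" where
  "b1 n p q r = (\<Sum>\<rho>\<in>inv_seqs n. p ^ levels n \<rho> * q ^ descents n \<rho> * r ^ ascents n \<rho>)"

definition eulerian :: "nat \<Rightarrow> nat \<Rightarrow> nat" where
  "eulerian n k = card {\<sigma>. \<sigma> permutes {1..n} \<and> card {i\<in>{1..<n}. \<sigma> i < \<sigma> (Suc i)} = k}"

end

theory Submission
  imports Defs
begin


lemma finite_inv_seqs[simp]: "finite (inv_seqs n)"
  unfolding inv_seqs_def by (intro finite_PiE) auto

lemma card_inv_seqs: "card (inv_seqs n) = fact n"
  unfolding inv_seqs_def by (simp add: card_PiE fact_prod)

lemma inv_seqs_Suc: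
  "inv_seqs (Suc n) = (\<lambda>(\<rho>,a). \<rho>(Suc n := a)) ` (SIGMA \<rho>:inv_seqs n. {1..Suc n})"
proof -
  have "{1..Suc n} = insert (Suc n) {1..n}" by auto
  hence "inv_seqs (Suc n) = (\<lambda>(y, g). g(Suc n := y)) ` ({1..Suc n} \<times> inv_seqs n)"
    unfolding inv_seqs_def by (simp add: PiE_insert_eq)
  also have "\<dots> = (\<lambda>(\<rho>,a). \<rho>(Suc n := a)) ` (SIGMA \<rho>:inv_seqs n. {1..Suc n})"
    by force
  finally show ?thesis .
qed

lemma inj_ext: "inj_on (\<lambda>(\<rho>,a). \<rho>(Suc n := a)) (SIGMA \<rho>:inv_seqs n. {1..Suc n})"
proof (rule inj_onI, clarsimp)
  fix \<rho> a \<tau> b assume r: "\<rho> \<in> inv_seqs n" "\<tau> \<in> inv_seqs n" and e: "\<rho>(Suc n := a) = \<tau>(Suc n := b)"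
  have "a = b" using fun_cong[OF e, of "Suc n"] by simp
  moreover have "\<rho> = \<tau>"
  proof
    fix x show "\<rho> x = \<tau> x"
    proof (cases "x = Suc n")
      case True
      then show ?thesis using r unfolding inv_seqs_def by (auto simp: PiE_def extensional_def)
    next
      case False
      then show ?thesis using fun_cong[OF e, of x] by simp
    qed
  qed
  ultimately show "\<rho> = \<tau> \<and> a = b" by simp
qed

lemma card_split:
  "card {\<rho>\<in>inv_seqs (Suc n). P \<rho>} = (\<Sum>\<rho>\<in>inv_seqs n. card {a\<in>{1..Suc n}. P (\<rho>(Suc n := a))})"
proof -
  have "{\<rho>\<in>inv_seqs (Suc n). P \<rho>} = (\<lambda>(\<rho>,a). \<rho>(Suc n := a)) ` (SIGMA \<rho>:inv_seqs n. {a\<in>{1..Suc n}. P (\<rho>(Suc n := a))})"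
    unfolding inv_seqs_Suc by auto
  also have "card \<dots> = card (SIGMA \<rho>:inv_seqs n. {a\<in>{1..Suc n}. P (\<rho>(Suc n := a))})"
    by (rule card_image, rule inj_on_subset[OF inj_ext]) auto
  also have "\<dots> = (\<Sum>\<rho>\<in>inv_seqs n. card {a\<in>{1..Suc n}. P (\<rho>(Suc n := a))})"
    by simp
  finally show ?thesis .
qed

lemma levels_ext:
  assumes "n \<ge> 1"
  shows "levels (Suc n) (\<rho>(Suc n := a)) = levels n \<rho> + (if \<rho> n = a then 1 else 0)"
proof -
  have "{i\<in>{1..<Suc n}. (\<rho>(Suc n := a)) i = (\<rho>(Suc n := a)) (Suc i)}
      = {i\<in>{1..<n}. \<rho> i = \<rho> (Suc i)} \<union> (if \<rho> n = a then {n} else {})"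
    using assms by (auto simp: less_Suc_eq)
  then show ?thesis unfolding levels_def by (simp add: card_Un_disjoint)
qed

lemma levels_le: "levels n \<rho> \<le> n - 1"
  unfolding levels_def by (rule order_trans[OF card_mono[of "{1..<n}"]]) auto
lemma descents_le: "descents n \<rho> \<le> n - 1"
  unfolding descents_def by (rule order_trans[OF card_mono[of "{1..<n}"]]) auto
lemma ascents_le: "ascents n \<rho> \<le> n - 1"
  unfolding ascents_def by (rule order_trans[OF card_mono[of "{1..<n}"]]) auto

lemma inv_seqs_val: "\<rho> \<in> inv_seqs n \<Longrightarrow> i \<in> {1..n} \<Longrightarrow> \<rho> i \<in> {1..i}"
  unfolding inv_seqs_def by auto

lemma levels_count:
  assumes "n \<ge> 1"
  shows "card {\<rho>\<in>inv_seqs n. levels n \<rho> = k} = stirling n (k+1)"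
  using assms
proof (induction n arbitrary: k rule: nat_induct_at_least)
  case base
  have "inv_seqs 1 = {\<lambda>i. if i = 1 then 1 else undefined}"
    unfolding inv_seqs_def by (auto simp: PiE_def extensional_def fun_eq_iff)
  then show ?case by (cases k) (auto simp: levels_def)
next
  case (Suc n)
  have c: "card {a\<in>{1..Suc n}. levels (Suc n) (\<rho>(Suc n := a)) = k}
     = (if levels n \<rho> + 1 = k then 1 else 0) + (if levels n \<rho> = k then n else 0)"
    if r: "\<rho> \<in> inv_seqs n" for \<rho>
  proof -
    have rn: "\<rho> n \<in> {1..n}" using inv_seqs_val[OF r, of n] Suc.hyps by auto
    have "{a\<in>{1..Suc n}. levels (Suc n) (\<rho>(Suc n := a)) = k}
      = (if levels n \<rho> + 1 = k then {\<rho> n} else {}) \<union> (if levels n \<rho> = k then {1..Suc n} - {\<rho> n} else {})"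
      using rn by (auto simp: levels_ext[OF Suc.hyps])
    moreover have "card ({1..Suc n} - {\<rho> n}) = n" using rn by simp
    ultimately show ?thesis by auto
  qed
  have "card {\<rho>\<in>inv_seqs (Suc n). levels (Suc n) \<rho> = k}
     = (\<Sum>\<rho>\<in>inv_seqs n. (if levels n \<rho> + 1 = k then 1 else 0) + (if levels n \<rho> = k then n else 0))"
    unfolding card_split by (rule sum.cong[OF refl]) (rule c)
  also have "\<dots> = card {\<rho>\<in>inv_seqs n. levels n \<rho> + 1 = k} + n * card {\<rho>\<in>inv_seqs n. levels n \<rho> = k}"
    by (simp add: sum.distrib sum.If_cases mult.commute Int_def)
  also have "\<dots> = stirling (Suc n) (k+1)"
  proof (cases k)
    case 0
    then show ?thesis using Suc by simp
  next
    case (Suc k')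
    then show ?thesis using Suc.IH by simp
  qed
  finally show ?case .
qed



definition lcode :: "nat \<Rightarrow> (nat \<Rightarrow> nat) \<Rightarrow> nat \<Rightarrow> nat" where
  "lcode n \<sigma> = (\<lambda>i\<in>{1..n}. card {j\<in>{1..i}. \<sigma> j \<le> \<sigma> i})"

lemma lcode_in: "lcode n \<sigma> \<in> inv_seqs n"
proof -
  have "card {j\<in>{1..i}. \<sigma> j \<le> \<sigma> i} \<in> {1..i}" if "i \<in> {1..n}" for i
  proof -
    have "card {j\<in>{1..i}. \<sigma> j \<le> \<sigma> i} \<le> card {1..i}" by (rule card_mono) auto
    moreover have "{j\<in>{1..i}. \<sigma> j \<le> \<sigma> i} \<noteq> {}" using that by auto
    ultimately show ?thesis by (auto simp: card_gt_0_iff Suc_le_eq)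
  qed
  then show ?thesis unfolding lcode_def inv_seqs_def by auto
qed

lemma ins_eq:
  fixes f :: "nat \<Rightarrow> nat"
  assumes "inj_on f {1..Suc m}"
  shows "{j\<in>{1..Suc m}. f j \<le> f (Suc m)} = insert (Suc m) {j\<in>{1..m}. f j < f (Suc m)}"
proof (intro equalityI subsetI)
  fix j assume j: "j \<in> {j\<in>{1..Suc m}. f j \<le> f (Suc m)}"
  show "j \<in> insert (Suc m) {j\<in>{1..m}. f j < f (Suc m)}"
  proof (cases "j = Suc m")
    case False
    then have "j \<in> {1..m}" using j by auto
    moreover have "f j \<noteq> f (Suc m)" using False j inj_onD[OF assms, of j "Suc m"] by auto
    ultimately show ?thesis using j by auto
  qed simp
qed auto

lemma order_agree:
  fixes f g :: "nat \<Rightarrow> nat"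
  assumes "inj_on f {1..m}" "inj_on g {1..m}"
    "\<forall>i\<in>{1..m}. card {j\<in>{1..i}. f j \<le> f i} = card {j\<in>{1..i}. g j \<le> g i}"
  shows "\<forall>i\<in>{1..m}. \<forall>j\<in>{1..m}. (f i < f j \<longleftrightarrow> g i < g j)"
  using assms
proof (induction m)
  case 0
  then show ?case by simp
next
  case (Suc m)
  have IH: "\<forall>i\<in>{1..m}. \<forall>j\<in>{1..m}. (f i < f j \<longleftrightarrow> g i < g j)"
    using Suc.prems by (intro Suc.IH) (auto intro: inj_on_subset)
  define Sf where "Sf = {j\<in>{1..m}. f j < f (Suc m)}"
  define Sg where "Sg = {j\<in>{1..m}. g j < g (Suc m)}"
  have cf: "card {j\<in>{1..Suc m}. f j \<le> f (Suc m)} = Suc (card Sf)"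
  proof -
    have "{j\<in>{1..Suc m}. f j \<le> f (Suc m)} = insert (Suc m) Sf"
      unfolding Sf_def by (rule ins_eq[OF Suc.prems(1)])
    then show ?thesis unfolding Sf_def by simp
  qed
  have cg: "card {j\<in>{1..Suc m}. g j \<le> g (Suc m)} = Suc (card Sg)"
  proof -
    have "{j\<in>{1..Suc m}. g j \<le> g (Suc m)} = insert (Suc m) Sg"
      unfolding Sg_def by (rule ins_eq[OF Suc.prems(2)])
    then show ?thesis unfolding Sg_def by simp
  qed
  have ceq: "card Sf = card Sg" using cf cg Suc.prems(3) by force
  have nest: "Sf \<subseteq> Sg \<or> Sg \<subseteq> Sf"
  proof (rule ccontr)
    assume "\<not> (Sf \<subseteq> Sg \<or> Sg \<subseteq> Sf)"
    then obtain a b where a: "a \<in> Sf" "a \<notin> Sg" and b: "b \<in> Sg" "b \<notin> Sf" by blast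
    have am: "a \<in> {1..m}" "b \<in> {1..m}" using a b unfolding Sf_def Sg_def by auto
    have "a \<noteq> b" using a b by auto
    then have "f a \<noteq> f b" using Suc.prems(1) am by (auto simp: inj_on_def)
    then consider "f a < f b" | "f b < f a" by linarith
    then show False
    proof cases
      case 1
      then have "g a < g b" using IH am by blast
      then show False using a b unfolding Sf_def Sg_def by auto
    next
      case 2
      then show False using a b unfolding Sf_def Sg_def by auto
    qed
  qed
  have SS: "Sf = Sg"
  proof -
    have fin: "finite Sf" "finite Sg" unfolding Sf_def Sg_def by auto
    from nest show ?thesis
      using card_subset_eq[OF fin(2)] card_subset_eq[OF fin(1)] ceq by auto
  qed
  show ?case
  proof (intro ballI)
    fix i j assume ij: "i \<in> {1..Suc m}" "j \<in> {1..Suc m}"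
    show "f i < f j \<longleftrightarrow> g i < g j"
    proof (cases "i = Suc m")
      case True
      show ?thesis
      proof (cases "j = Suc m")
        case True
        then show ?thesis using \<open>i = Suc m\<close> by simp
      next
        case False
        then have jm: "j \<in> {1..m}" using ij by auto
        have "f j \<noteq> f (Suc m)" "g j \<noteq> g (Suc m)" 
          using inj_onD[OF Suc.prems(1), of j "Suc m"] inj_onD[OF Suc.prems(2), of j "Suc m"] jm False
          by auto
        moreover have "f j < f (Suc m) \<longleftrightarrow> g j < g (Suc m)"
          using SS jm unfolding Sf_def Sg_def by blast
        ultimately show ?thesis using True by auto
      qed
    next
      case False
      then have im: "i \<in> {1..m}" using ij by auto
      show ?thesis
      proof (cases "j = Suc m")
        case True
        then show ?thesis using SS im unfolding Sf_def Sg_def by blast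
      next
        case False
        then show ?thesis using im ij IH by auto
      qed
    qed
  qed
qed

lemma perm_val:
  assumes "\<sigma> permutes {1..n}" "i \<in> {1..n}"
  shows "card {j\<in>{1..n}. \<sigma> j \<le> \<sigma> i} = \<sigma> i"
proof -
  have inj: "inj_on \<sigma> {1..n}" using assms(1) permutes_inj_on by blast
  have im: "\<sigma> ` {1..n} = {1..n}" using assms(1) permutes_image by blast
  have "\<sigma> ` {j\<in>{1..n}. \<sigma> j \<le> \<sigma> i} = {x\<in>\<sigma> ` {1..n}. x \<le> \<sigma> i}" by auto
  also have "\<dots> = {1..\<sigma> i}"
  proof -
    have "\<sigma> i \<in> {1..n}" using im assms(2) by blast
    then show ?thesis using im by auto
  qed
  finally have "card (\<sigma> ` {j\<in>{1..n}. \<sigma> j \<le> \<sigma> i}) = \<sigma> i" by simp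
  moreover have "card (\<sigma> ` {j\<in>{1..n}. \<sigma> j \<le> \<sigma> i}) = card {j\<in>{1..n}. \<sigma> j \<le> \<sigma> i}"
    by (rule card_image, rule inj_on_subset[OF inj]) auto
  ultimately show ?thesis by simp
qed

lemma lcode_inj: "inj_on (lcode n) {\<sigma>. \<sigma> permutes {1..n}}"
proof (rule inj_onI)
  fix \<sigma> \<tau> assume s': "\<sigma> \<in> {\<sigma>. \<sigma> permutes {1..n}}" and t': "\<tau> \<in> {\<sigma>. \<sigma> permutes {1..n}}" and e: "lcode n \<sigma> = lcode n \<tau>"
  have s: "\<sigma> permutes {1..n}" and t: "\<tau> permutes {1..n}" using s' t' by auto
  have ij: "inj_on \<sigma> {1..n}" "inj_on \<tau> {1..n}" using s t permutes_inj_on by blast+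
  have "\<forall>i\<in>{1..n}. card {j\<in>{1..i}. \<sigma> j \<le> \<sigma> i} = card {j\<in>{1..i}. \<tau> j \<le> \<tau> i}"
  proof
    fix i assume "i \<in> {1..n}"
    then show "card {j\<in>{1..i}. \<sigma> j \<le> \<sigma> i} = card {j\<in>{1..i}. \<tau> j \<le> \<tau> i}"
      using fun_cong[OF e, of i] unfolding lcode_def by simp
  qed
  from order_agree[OF ij this] have oa: "\<forall>i\<in>{1..n}. \<forall>j\<in>{1..n}. (\<sigma> i < \<sigma> j \<longleftrightarrow> \<tau> i < \<tau> j)" .
  show "\<sigma> = \<tau>"
  proof
    fix i show "\<sigma> i = \<tau> i"
    proof (cases "i \<in> {1..n}")
      case True
      have "{j\<in>{1..n}. \<sigma> j \<le> \<sigma> i} = {j\<in>{1..n}. \<tau> j \<le> \<tau> i}"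
        using oa True by (auto simp: not_less[symmetric])
      then show ?thesis using perm_val[OF s True] perm_val[OF t True] by simp
    next
      case False
      then show ?thesis using permutes_not_in[OF s] permutes_not_in[OF t] by simp
    qed
  qed
qed

lemma lcode_bij: "bij_betw (lcode n) {\<sigma>. \<sigma> permutes {1..n}} (inv_seqs n)"
proof -
  have sub: "lcode n ` {\<sigma>. \<sigma> permutes {1..n}} \<subseteq> inv_seqs n" using lcode_in by auto
  have "card (lcode n ` {\<sigma>. \<sigma> permutes {1..n}}) = card {\<sigma>. \<sigma> permutes {1..n}}"
    by (rule card_image[OF lcode_inj])
  also have "\<dots> = fact n" by (rule card_permutations) auto
  finally have "lcode n ` {\<sigma>. \<sigma> permutes {1..n}} = inv_seqs n"
    using card_subset_eq[OF finite_inv_seqs sub] card_inv_seqs by simp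
  then show ?thesis using lcode_inj unfolding bij_betw_def by simp
qed

lemma lcode_asc:
  assumes inj: "inj_on \<sigma> {1..n}" and i: "i \<in> {1..<n}"
  shows "lcode n \<sigma> i < lcode n \<sigma> (Suc i) \<longleftrightarrow> \<sigma> i < \<sigma> (Suc i)"
proof -
  have li: "lcode n \<sigma> i = card {j\<in>{1..i}. \<sigma> j \<le> \<sigma> i}"
   and lsi: "lcode n \<sigma> (Suc i) = card {j\<in>{1..Suc i}. \<sigma> j \<le> \<sigma> (Suc i)}"
    using i unfolding lcode_def by auto
  have ne: "\<sigma> i \<noteq> \<sigma> (Suc i)" using inj_onD[OF inj, of i "Suc i"] i by auto
  show ?thesis
  proof (cases "\<sigma> i < \<sigma> (Suc i)")
    case True
    have s1: "{j\<in>{1..i}. \<sigma> j \<le> \<sigma> i} \<subseteq> {j\<in>{1..Suc i}. \<sigma> j \<le> \<sigma> (Suc i)}"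
      using True by auto
    have s2: "Suc i \<in> {j\<in>{1..Suc i}. \<sigma> j \<le> \<sigma> (Suc i)}" "Suc i \<notin> {j\<in>{1..i}. \<sigma> j \<le> \<sigma> i}"
      by auto
    have "{j\<in>{1..i}. \<sigma> j \<le> \<sigma> i} \<subset> {j\<in>{1..Suc i}. \<sigma> j \<le> \<sigma> (Suc i)}"
      using s1 s2 by blast
    then have "card {j\<in>{1..i}. \<sigma> j \<le> \<sigma> i} < card {j\<in>{1..Suc i}. \<sigma> j \<le> \<sigma> (Suc i)}"
      by (intro psubset_card_mono) auto
    then show ?thesis using True li lsi by simp
  next
    case False
    then have lt: "\<sigma> (Suc i) < \<sigma> i" using ne by simp
    have "{j\<in>{1..Suc i}. \<sigma> j \<le> \<sigma> (Suc i)} \<subseteq> insert (Suc i) ({j\<in>{1..i}. \<sigma> j \<le> \<sigma> i} - {i})"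
      using lt by (auto simp: le_Suc_eq)
    then have "card {j\<in>{1..Suc i}. \<sigma> j \<le> \<sigma> (Suc i)} \<le> card (insert (Suc i) ({j\<in>{1..i}. \<sigma> j \<le> \<sigma> i} - {i}))"
      by (intro card_mono) auto
    also have "\<dots> = Suc (card {j\<in>{1..i}. \<sigma> j \<le> \<sigma> i} - 1)"
      using i by (simp add: card_Diff_singleton)
    also have "\<dots> = card {j\<in>{1..i}. \<sigma> j \<le> \<sigma> i}"
    proof -
      have "i \<in> {j\<in>{1..i}. \<sigma> j \<le> \<sigma> i}" using i by auto
      then have "card {j\<in>{1..i}. \<sigma> j \<le> \<sigma> i} > 0" by (auto simp: card_gt_0_iff)
      then show ?thesis by simp
    qed
    finally show ?thesis using False li lsi by simp
  qed
qed

lemma lcode_ascents: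
  assumes "\<sigma> permutes {1..n}"
  shows "ascents n (lcode n \<sigma>) = ascents n \<sigma>"
proof -
  have inj: "inj_on \<sigma> {1..n}" using assms permutes_inj_on by blast
  show ?thesis unfolding ascents_def
    by (rule arg_cong[where f=card]) (use lcode_asc[OF inj] in auto)
qed

lemma bij_card_filter:
  assumes "bij_betw f A B"
  shows "card {b\<in>B. P b} = card {a\<in>A. P (f a)}"
proof -
  have "{b\<in>B. P b} = f ` {a\<in>A. P (f a)}" using assms unfolding bij_betw_def by auto
  moreover have "inj_on f {a\<in>A. P (f a)}"
    using assms unfolding bij_betw_def by (auto intro: inj_on_subset)
  ultimately show ?thesis by (simp add: card_image)
qed

lemma eulerian_alt: "eulerian n k = card {\<sigma>\<in>{\<sigma>. \<sigma> permutes {1..n}}. ascents n \<sigma> = k}"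
  unfolding eulerian_def ascents_def by simp

lemma ascents_count: "card {\<rho>\<in>inv_seqs n. ascents n \<rho> = k} = eulerian n k"
  unfolding eulerian_alt bij_card_filter[OF lcode_bij]
  by (rule arg_cong[where f=card]) (auto simp: lcode_ascents)



definition cm :: "nat \<Rightarrow> nat \<Rightarrow> nat" where
  "cm n x = (if x \<in> {1..n} then Suc n - x else x)"

lemma cm_cm[simp]: "cm n (cm n x) = x"
  unfolding cm_def by auto

lemma cm_permutes: "cm n permutes {1..n}"
proof (rule bij_imp_permutes)
  show "bij_betw (cm n) {1..n} {1..n}"
  proof (rule bij_betw_byWitness[where f'="cm n"])
    show "cm n ` {1..n} \<subseteq> {1..n}" unfolding cm_def by auto
  qed (auto simp: cm_def)
qed (auto simp: cm_def)

lemma asc_partition: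
  fixes \<sigma> :: "nat \<Rightarrow> nat"
  shows "card {i\<in>{1..<n}. \<sigma> (Suc i) < \<sigma> i} + card {i\<in>{1..<n}. \<sigma> i = \<sigma> (Suc i)} = (n - 1) - ascents n \<sigma>"
proof -
  let ?A = "{i\<in>{1..<n}. \<sigma> i < \<sigma> (Suc i)}"
  have "{i\<in>{1..<n}. \<sigma> (Suc i) < \<sigma> i} \<union> {i\<in>{1..<n}. \<sigma> i = \<sigma> (Suc i)} = {1..<n} - ?A"
    by auto
  moreover have "card ({1..<n} - ?A) = (n - 1) - card ?A"
    by (subst card_Diff_subset) auto
  moreover have "card ({i\<in>{1..<n}. \<sigma> (Suc i) < \<sigma> i} \<union> {i\<in>{1..<n}. \<sigma> i = \<sigma> (Suc i)})
     = card {i\<in>{1..<n}. \<sigma> (Suc i) < \<sigma> i} + card {i\<in>{1..<n}. \<sigma> i = \<sigma> (Suc i)}"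
    by (rule card_Un_disjoint) auto
  ultimately show ?thesis unfolding ascents_def by simp
qed

lemma levdes: "levels n \<rho> + descents n \<rho> = (n - 1) - ascents n \<rho>"
  using asc_partition[of n \<rho>] unfolding levels_def descents_def by simp

lemma cm_ascents:
  assumes s: "\<sigma> permutes {1..n}"
  shows "ascents n (cm n \<circ> \<sigma>) = (n - 1) - ascents n \<sigma>"
proof -
  have inj: "inj_on \<sigma> {1..n}" using s permutes_inj_on by blast
  have eq0: "{i\<in>{1..<n}. \<sigma> i = \<sigma> (Suc i)} = {}"
  proof -
    have "\<sigma> i \<noteq> \<sigma> (Suc i)" if "i \<in> {1..<n}" for i
      using inj_onD[OF inj, of i "Suc i"] that by auto
    then show ?thesis by auto
  qed
  have vals: "\<sigma> i \<in> {1..n}" if "i \<in> {1..n}" for i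
    using permutes_in_image[OF s] that by simp
  have setq: "{i\<in>{1..<n}. (cm n \<circ> \<sigma>) i < (cm n \<circ> \<sigma>) (Suc i)} = {i\<in>{1..<n}. \<sigma> (Suc i) < \<sigma> i}"
  proof (rule Collect_cong, rule conj_cong[OF refl])
    fix i assume i: "i \<in> {1..<n}"
    then have "\<sigma> i \<in> {1..n}" "\<sigma> (Suc i) \<in> {1..n}" using vals by auto
    then show "(cm n \<circ> \<sigma>) i < (cm n \<circ> \<sigma>) (Suc i) \<longleftrightarrow> \<sigma> (Suc i) < \<sigma> i"
      unfolding cm_def by auto
  qed
  have c0: "card {i\<in>{1..<n}. \<sigma> i = \<sigma> (Suc i)} = 0" unfolding eq0 by (rule card.empty)
  have p: "card {i\<in>{1..<n}. \<sigma> (Suc i) < \<sigma> i} + card {i\<in>{1..<n}. \<sigma> i = \<sigma> (Suc i)} = (n - 1) - ascents n \<sigma>"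
    by (rule asc_partition)
  show ?thesis unfolding ascents_def[of n "cm n \<circ> \<sigma>"] setq using p c0 by linarith
qed

lemma eulerian_le:
  assumes "k \<le> n - 1"
  shows "eulerian n k \<le> eulerian n (n - 1 - k)"
proof -
  have "card {\<sigma>\<in>{\<sigma>. \<sigma> permutes {1..n}}. ascents n \<sigma> = k}
     \<le> card {\<sigma>\<in>{\<sigma>. \<sigma> permutes {1..n}}. ascents n \<sigma> = n - 1 - k}"
  proof (rule card_inj_on_le[where f="\<lambda>\<sigma>. cm n \<circ> \<sigma>"])
    show "inj_on (\<lambda>\<sigma>. cm n \<circ> \<sigma>) {\<sigma>\<in>{\<sigma>. \<sigma> permutes {1..n}}. ascents n \<sigma> = k}"
    proof (rule inj_onI)
      fix \<sigma> \<tau> assume "cm n \<circ> \<sigma> = cm n \<circ> \<tau>"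
      then have "cm n \<circ> (cm n \<circ> \<sigma>) = cm n \<circ> (cm n \<circ> \<tau>)" by simp
      then show "\<sigma> = \<tau>" by (simp add: fun_eq_iff)
    qed
    show "(\<lambda>\<sigma>. cm n \<circ> \<sigma>) ` {\<sigma>\<in>{\<sigma>. \<sigma> permutes {1..n}}. ascents n \<sigma> = k}
        \<subseteq> {\<sigma>\<in>{\<sigma>. \<sigma> permutes {1..n}}. ascents n \<sigma> = n - 1 - k}"
      using cm_ascents permutes_compose[OF _ cm_permutes] by auto
    show "finite {\<sigma>\<in>{\<sigma>. \<sigma> permutes {1..n}}. ascents n \<sigma> = n - 1 - k}"
      by (auto intro: finite_permutations)
  qed
  then show ?thesis unfolding eulerian_alt .
qed

lemma eulerian_sym: assumes "k \<le> n - 1" shows "eulerian n (n - 1 - k) = eulerian n k"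
proof -
  have e: "n - 1 - (n - 1 - k) = k" using assms by simp
  have "eulerian n (n - 1 - k) \<le> eulerian n k" using eulerian_le[of "n - 1 - k" n] e by simp
  then show ?thesis using eulerian_le[OF assms] by simp
qed

lemma levdes_count: "card {\<rho>\<in>inv_seqs n. levels n \<rho> + descents n \<rho> = k} = eulerian n k"
proof (cases "k \<le> n - 1")
  case True
  have "{\<rho>\<in>inv_seqs n. levels n \<rho> + descents n \<rho> = k} = {\<rho>\<in>inv_seqs n. ascents n \<rho> = n - 1 - k}"
  proof -
    have "(levels n \<rho> + descents n \<rho> = k) = (ascents n \<rho> = n - 1 - k)" for \<rho>
      using True ascents_le[of n \<rho>] unfolding levdes by arith
    then show ?thesis by simp
  qed
  then show ?thesis using ascents_count eulerian_sym[OF True] by simp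
next
  case False
  have "{\<rho>\<in>inv_seqs n. levels n \<rho> + descents n \<rho> = k} = {}"
    using False by (auto simp: levdes)
  moreover have "{\<rho>\<in>inv_seqs n. ascents n \<rho> = k} = {}"
    using False ascents_le[of n] by auto
  ultimately show ?thesis using ascents_count[of n k] by (metis card.empty)
qed

lemma sum_group_pow:
  fixes t :: "'a::comm_semiring_1"
  assumes "finite A" "\<And>a. a \<in> A \<Longrightarrow> g a \<le> m"
  shows "(\<Sum>a\<in>A. t ^ g a) = (\<Sum>k=0..m. of_nat (card {a\<in>A. g a = k}) * t ^ k)"
proof -
  have "(\<Sum>a\<in>A. t ^ g a) = (\<Sum>k=0..m. \<Sum>a\<in>{a\<in>A. g a = k}. t ^ g a)"
    by (rule sum.group[symmetric]) (use assms in auto)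
  also have "\<dots> = (\<Sum>k=0..m. of_nat (card {a\<in>A. g a = k}) * t ^ k)"
    by (rule sum.cong[OF refl]) simp
  finally show ?thesis .
qed

theorem theorem3p5:
  fixes n :: nat and t :: "'a::comm_semiring_1"
  assumes "n \<ge> 1"
  shows "b1 n t 1 1 = (\<Sum>k=0..n-1. of_nat (stirling n (k+1)) * t ^ k)
       \<and> b1 n 1 1 t = (\<Sum>k=0..n-1. of_nat (eulerian n k) * t ^ k)
       \<and> b1 n t t 1 = (\<Sum>k=0..n-1. of_nat (eulerian n k) * t ^ k)
       \<and> (\<forall>k. card {\<rho>\<in>inv_seqs n. levels n \<rho> = k} = stirling n (k+1))
       \<and> (\<forall>k. card {\<rho>\<in>inv_seqs n. ascents n \<rho> = k} = eulerian n k)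
       \<and> (\<forall>k. card {\<rho>\<in>inv_seqs n. levels n \<rho> + descents n \<rho> = k} = eulerian n k)"
proof (intro conjI allI)
  have l1: "\<And>\<rho>. \<rho> \<in> inv_seqs n \<Longrightarrow> levels n \<rho> \<le> n - 1" by (rule levels_le)
  have l2: "\<And>\<rho>. \<rho> \<in> inv_seqs n \<Longrightarrow> ascents n \<rho> \<le> n - 1" by (rule ascents_le)
  have l3: "\<And>\<rho>. \<rho> \<in> inv_seqs n \<Longrightarrow> levels n \<rho> + descents n \<rho> \<le> n - 1" by (simp add: levdes)
  show "b1 n t 1 1 = (\<Sum>k=0..n-1. of_nat (stirling n (k+1)) * t ^ k)"
    unfolding b1_def using sum_group_pow[where A="inv_seqs n" and g="levels n" and m="n - 1" and t=t, OF finite_inv_seqs l1]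
    by (simp add: levels_count[OF assms])
  show "b1 n 1 1 t = (\<Sum>k=0..n-1. of_nat (eulerian n k) * t ^ k)"
    unfolding b1_def using sum_group_pow[where A="inv_seqs n" and g="ascents n" and m="n - 1" and t=t, OF finite_inv_seqs l2]
    by (simp add: ascents_count)
  show "b1 n t t 1 = (\<Sum>k=0..n-1. of_nat (eulerian n k) * t ^ k)"
    unfolding b1_def using sum_group_pow[where A="inv_seqs n" and g="\<lambda>\<rho>. levels n \<rho> + descents n \<rho>" and m="n - 1" and t=t, OF finite_inv_seqs l3]
    by (simp add: levdes_count power_add)
  fix k
  show "card {\<rho>\<in>inv_seqs n. levels n \<rho> = k} = stirling n (k+1)" by (rule levels_count[OF assms])
  show "card {\<rho>\<in>inv_seqs n. ascents n \<rho> = k} = eulerian n k" by (rule ascents_count)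
  show "card {\<rho>\<in>inv_seqs n. levels n \<rho> + descents n \<rho> = k} = eulerian n k" by (rule levdes_count)
qed

end
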